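(* Let $d\ge 1$ be an integer and let $G$ be a graph that is closed in the $d$-rigidity matroid. Suppose $A,B$ are disjoint vertex subsets each of which induces a clique in $G$, and suppose $G$ contains a matching of $\binom{d+1}{2}$ edges each having one endpoint in $A$ and the other in $B$. Then $A\cup B$ induces a clique in $G$.
   Context: Fix $n$ and a generic $\mathbf p:[n]\to\mathbb R^d$ (its $dn$ coordinates algebraically independent over $\mathbb Q$). For $x\ne y\in[n]$, let $\mathbf r_{xy}\in\mathbb R^{dn}$ be the vector with $(\mathbf p(x)-\mathbf p(y))^T$ in the $d$ coordinates of $x$, $(\mathbf p(y)-\mathbf p(x))^T$ in the $d$ coordinates of $y$, and $0$ elsewhere. The $d$-rigidity closure of a graph $G$ on $[n]$ is the graph $C_d(G)$ with edge set $\{f\in\binom{[n]}2: \mathbf r_f\in\operatorname{span}_{\mathbb R}(\mathbf r_e: e\in G)\}$ (independent of the generic $\mathbf p$). $G$ is closed in the $d$-rigidity matroid if $C_d(G)=G$. *)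

theory Defs
  imports Complex_Main
begin

text \<open>Vertices are 0..<n. A configuration p assigns to vertex v and coordinate k<d the real p v k.
  Vectors in R^{dn} are functions on index pairs (vertex, coordinate).\<close>

definition coord_box :: "nat \<Rightarrow> nat \<Rightarrow> (nat \<times> nat) set" where
  "coord_box d n = {0..<n} \<times> {0..<d}"

text \<open>Algebraic independence over Q of the dn coordinates: no nonzero rational polynomial
  (finite set of distinct monomials with rational coefficients, not all zero) in the variables
  indexed by the box vanishes at p.\<close>
definition generic :: "nat \<Rightarrow> nat \<Rightarrow> (nat \<Rightarrow> nat \<Rightarrow> real) \<Rightarrow> bool" where
  "generic d n p \<longleftrightarrow>
     (\<forall>(M :: ((nat \<times> nat) \<Rightarrow> nat) set) (c :: ((nat \<times> nat) \<Rightarrow> nat) \<Rightarrow> rat).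
        finite M \<and> (\<forall>m\<in>M. \<forall>i. i \<notin> coord_box d n \<longrightarrow> m i = 0) \<and> (\<exists>m\<in>M. c m \<noteq> 0)
        \<longrightarrow> (\<Sum>m\<in>M. of_rat (c m) * (\<Prod>i\<in>coord_box d n. p (fst i) (snd i) ^ m i)) \<noteq> (0::real))"

definition rvec :: "nat \<Rightarrow> nat \<Rightarrow> (nat \<Rightarrow> nat \<Rightarrow> real) \<Rightarrow> nat \<Rightarrow> nat \<Rightarrow> (nat \<times> nat \<Rightarrow> real)" where
  "rvec d n p x y = (\<lambda>(v, k). if v < n \<and> k < d then
        (if v = x then p x k - p y k else if v = y then p y k - p x k else 0) else 0)"

definition in_real_span :: "('i \<Rightarrow> real) \<Rightarrow> ('i \<Rightarrow> real) set \<Rightarrow> bool" where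
  "in_real_span w S \<longleftrightarrow> (\<exists>T c. finite T \<and> T \<subseteq> S \<and> w = (\<lambda>i. \<Sum>u\<in>T. c u * u i))"

definition is_graph :: "nat \<Rightarrow> nat set set \<Rightarrow> bool" where
  "is_graph n G \<longleftrightarrow> (\<forall>e\<in>G. e \<subseteq> {0..<n} \<and> card e = 2)"

definition rigidity_closure :: "nat \<Rightarrow> nat \<Rightarrow> (nat \<Rightarrow> nat \<Rightarrow> real) \<Rightarrow> nat set set \<Rightarrow> nat set set" where
  "rigidity_closure d n p G =
     {{x, y} | x y. x < n \<and> y < n \<and> x \<noteq> y \<and>
        in_real_span (rvec d n p x y) {rvec d n p u v | u v. u \<noteq> v \<and> {u, v} \<in> G}}"

text \<open>Closed in the d-rigidity matroid (closure is independent of the generic p).\<close>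
definition rigidity_closed :: "nat \<Rightarrow> nat \<Rightarrow> nat set set \<Rightarrow> bool" where
  "rigidity_closed d n G \<longleftrightarrow> (\<exists>p. generic d n p \<and> rigidity_closure d n p G = G)"

definition is_clique :: "nat set set \<Rightarrow> nat set \<Rightarrow> bool" where
  "is_clique G A \<longleftrightarrow> (\<forall>x\<in>A. \<forall>y\<in>A. x \<noteq> y \<longrightarrow> {x, y} \<in> G)"

end

theory Submission
  imports Defs "Jordan_Normal_Form.Determinant"
begin


definition monom :: "nat \<Rightarrow> nat \<Rightarrow> ((nat\<times>nat) \<Rightarrow> nat) \<Rightarrow> (nat \<Rightarrow> nat \<Rightarrow> real) \<Rightarrow> real" where
  "monom d n m q = (\<Prod>i\<in>coord_box d n. q (fst i) (snd i) ^ m i)"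

definition polyfun :: "nat \<Rightarrow> nat \<Rightarrow> ((nat \<Rightarrow> nat \<Rightarrow> real) \<Rightarrow> real) \<Rightarrow> bool" where
  "polyfun d n F \<longleftrightarrow> (\<exists>M c. finite M \<and> (\<forall>m\<in>M. \<forall>i. i \<notin> coord_box d n \<longrightarrow> m i = 0)
     \<and> (\<forall>q. F q = (\<Sum>m\<in>M. of_rat (c m) * monom d n m q)))"

lemma finite_box: "finite (coord_box d n)"
  unfolding coord_box_def by auto

lemma polyfun_transfer:
  assumes "polyfun d n F" "generic d n p" "F q \<noteq> 0"
  shows "F p \<noteq> 0"
proof -
  obtain M c where M: "finite M" "\<forall>m\<in>M. \<forall>i. i \<notin> coord_box d n \<longrightarrow> m i = 0"
    "\<And>q. F q = (\<Sum>m\<in>M. of_rat (c m) * monom d n m q)"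
    using assms(1) unfolding polyfun_def by blast
  have "\<exists>m\<in>M. c m \<noteq> 0"
  proof (rule ccontr)
    assume "\<not> ?thesis"
    then have "F q = 0" using M(3)[of q] by simp
    then show False using assms(3) by simp
  qed
  then show ?thesis using assms(2) M unfolding generic_def monom_def by auto
qed

lemma polyfun_const: "polyfun d n (\<lambda>q. of_rat a)"
  unfolding polyfun_def
  by (rule exI[of _ "{\<lambda>_. 0}"], rule exI[of _ "\<lambda>_. a"]) (simp add: monom_def)

lemma polyfun_var:
  assumes "(v,k) \<in> coord_box d n"
  shows "polyfun d n (\<lambda>q. q v k)"
  unfolding polyfun_def
proof (rule exI[of _ "{\<lambda>i. if i = (v,k) then 1 else 0}"], rule exI[of _ "\<lambda>_. 1"], intro conjI allI)
  fix q :: "nat \<Rightarrow> nat \<Rightarrow> real"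
  have "monom d n (\<lambda>i. if i = (v,k) then 1 else 0) q
      = (\<Prod>i\<in>coord_box d n. if i = (v,k) then q (fst i) (snd i) else 1)"
    unfolding monom_def by (rule prod.cong) auto
  also have "\<dots> = q v k" using assms finite_box by (simp add: prod.delta)
  finally show "q v k = (\<Sum>m\<in>{\<lambda>i. if i = (v, k) then 1 else 0}. of_rat 1 * monom d n m q)" by simp
qed (use assms in auto)

lemma polyfun_add:
  assumes "polyfun d n F" "polyfun d n H"
  shows "polyfun d n (\<lambda>q. F q + H q)"
proof -
  obtain M1 c1 where M1: "finite M1" "\<forall>m\<in>M1. \<forall>i. i \<notin> coord_box d n \<longrightarrow> m i = 0"
    "\<And>q. F q = (\<Sum>m\<in>M1. of_rat (c1 m) * monom d n m q)"
    using assms(1) unfolding polyfun_def by blast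
  obtain M2 c2 where M2: "finite M2" "\<forall>m\<in>M2. \<forall>i. i \<notin> coord_box d n \<longrightarrow> m i = 0"
    "\<And>q. H q = (\<Sum>m\<in>M2. of_rat (c2 m) * monom d n m q)"
    using assms(2) unfolding polyfun_def by blast
  define c where "c m = (if m \<in> M1 then c1 m else 0) + (if m \<in> M2 then c2 m else 0)" for m
  have "F q + H q = (\<Sum>m\<in>M1 \<union> M2. of_rat (c m) * monom d n m q)" for q
  proof -
    have a: "F q = (\<Sum>m\<in>M1 \<union> M2. of_rat (if m \<in> M1 then c1 m else 0) * monom d n m q)"
      unfolding M1(3) using M1(1) M2(1)
      by (intro sum.mono_neutral_cong_left) auto
    have b: "H q = (\<Sum>m\<in>M1 \<union> M2. of_rat (if m \<in> M2 then c2 m else 0) * monom d n m q)"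
      unfolding M2(3) using M1(1) M2(1)
      by (intro sum.mono_neutral_cong_left) auto
    show ?thesis unfolding a b c_def of_rat_add distrib_right sum.distrib ..
  qed
  then show ?thesis unfolding polyfun_def using M1 M2
    by (intro exI[of _ "M1 \<union> M2"] exI[of _ c]) auto
qed

lemma monom_add: "monom d n (\<lambda>i. a i + b i) q = monom d n a q * monom d n b q"
  unfolding monom_def power_add prod.distrib ..

lemma polyfun_mult:
  assumes "polyfun d n F" "polyfun d n H"
  shows "polyfun d n (\<lambda>q. F q * H q)"
proof -
  obtain M1 c1 where M1: "finite M1" "\<forall>m\<in>M1. \<forall>i. i \<notin> coord_box d n \<longrightarrow> m i = 0"
    "\<And>q. F q = (\<Sum>m\<in>M1. of_rat (c1 m) * monom d n m q)"
    using assms(1) unfolding polyfun_def by blast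
  obtain M2 c2 where M2: "finite M2" "\<forall>m\<in>M2. \<forall>i. i \<notin> coord_box d n \<longrightarrow> m i = 0"
    "\<And>q. H q = (\<Sum>m\<in>M2. of_rat (c2 m) * monom d n m q)"
    using assms(2) unfolding polyfun_def by blast
  define h where "h = (\<lambda>(a::nat\<times>nat\<Rightarrow>nat,b::nat\<times>nat\<Rightarrow>nat). (\<lambda>i. a i + b i))"
  define M where "M = h ` (M1 \<times> M2)"
  define c where "c m = (\<Sum>x\<in>{x\<in>M1 \<times> M2. h x = m}. c1 (fst x) * c2 (snd x))" for m
  have "F q * H q = (\<Sum>m\<in>M. of_rat (c m) * monom d n m q)" for q
  proof -
    have "F q * H q = (\<Sum>x\<in>M1 \<times> M2. of_rat (c1 (fst x) * c2 (snd x)) * monom d n (h x) q)"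
      unfolding M1(3) M2(3) sum_product sum.cartesian_product h_def
      by (rule sum.cong) (auto simp: monom_add of_rat_mult)
    also have "\<dots> = (\<Sum>m\<in>M. \<Sum>x\<in>{x\<in>M1 \<times> M2. h x = m}. of_rat (c1 (fst x) * c2 (snd x)) * monom d n (h x) q)"
      unfolding M_def using M1(1) M2(1) by (rule sum.image_gen[OF finite_cartesian_product])
    also have "\<dots> = (\<Sum>m\<in>M. of_rat (c m) * monom d n m q)"
      unfolding c_def of_rat_sum sum_distrib_right by (intro sum.cong refl) auto
    finally show ?thesis .
  qed
  moreover have "\<forall>m\<in>M. \<forall>i. i \<notin> coord_box d n \<longrightarrow> m i = 0"
    using M1(2) M2(2) unfolding M_def h_def by auto
  moreover have "finite M" unfolding M_def using M1(1) M2(1) by auto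
  ultimately show ?thesis unfolding polyfun_def by blast
qed

lemma polyfun_of_int: "polyfun d n (\<lambda>q. of_int z)"
  using polyfun_const[of d n "of_int z"] by simp

lemma polyfun_neg: "polyfun d n F \<Longrightarrow> polyfun d n (\<lambda>q. - F q)"
  using polyfun_mult[OF polyfun_of_int[of d n "-1"]] by simp

lemma polyfun_sub: "polyfun d n F \<Longrightarrow> polyfun d n H \<Longrightarrow> polyfun d n (\<lambda>q. F q - H q)"
  using polyfun_add[OF _ polyfun_neg] by simp

lemma polyfun_sum:
  assumes "finite J" "\<And>j. j \<in> J \<Longrightarrow> polyfun d n (F j)"
  shows "polyfun d n (\<lambda>q. \<Sum>j\<in>J. F j q)"
  using assms
proof (induction J rule: finite_induct)
  case empty then show ?case using polyfun_of_int[of d n 0] by simp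
next
  case (insert x J) then show ?case using polyfun_add[of d n "F x"] by simp
qed

lemma polyfun_prod:
  assumes "finite J" "\<And>j. j \<in> J \<Longrightarrow> polyfun d n (F j)"
  shows "polyfun d n (\<lambda>q. \<Prod>j\<in>J. F j q)"
  using assms
proof (induction J rule: finite_induct)
  case empty then show ?case using polyfun_of_int[of d n 1] by simp
next
  case (insert x J) then show ?case using polyfun_mult[of d n "F x"] by simp
qed



definition ip :: "(nat\<times>nat) set \<Rightarrow> (nat\<times>nat \<Rightarrow> real) \<Rightarrow> (nat\<times>nat \<Rightarrow> real) \<Rightarrow> real" where
  "ip I f g = (\<Sum>i\<in>I. f i * g i)"

lemma ip_diff_left: "ip I (\<lambda>i. a i - b i) g = ip I a g - ip I b g"
  unfolding ip_def by (simp add: left_diff_distrib sum_subtractf)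
lemma ip_diff_right: "ip I g (\<lambda>i. a i - b i) = ip I g a - ip I g b"
  unfolding ip_def by (simp add: right_diff_distrib sum_subtractf)
lemma ip_add_right: "ip I g (\<lambda>i. a i + b i) = ip I g a + ip I g b"
  unfolding ip_def by (simp add: distrib_left sum.distrib)
lemma ip_scale_left: "ip I (\<lambda>i. x * a i) g = x * ip I a g"
  unfolding ip_def by (simp add: sum_distrib_left mult.assoc)
lemma ip_scale_right: "ip I g (\<lambda>i. x * a i) = x * ip I g a"
  unfolding ip_def by (simp add: sum_distrib_left mult.assoc mult.left_commute)
lemma ip_comm: "ip I f g = ip I g f"
  unfolding ip_def by (simp add: mult.commute)
lemma ip_sum_right: "ip I g (\<lambda>i. \<Sum>j\<in>J. c j * h j i) = (\<Sum>j\<in>J. c j * ip I g (h j))"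
  unfolding ip_def sum_distrib_left by (subst sum.swap) (simp add: mult.left_commute)
lemma ip_sum_left: "ip I (\<lambda>i. \<Sum>j\<in>J. c j * h j i) g = (\<Sum>j\<in>J. c j * ip I (h j) g)"
  using ip_sum_right[where I=I and g=g and J=J and c=c and h=h] by (simp add: ip_comm)

lemma ip_self_zero:
  assumes "finite I" "ip I f f = 0" "i \<in> I"
  shows "f i = 0"
proof -
  have "\<forall>i\<in>I. f i * f i = 0"
    using assms(1,2) unfolding ip_def by (subst sum_nonneg_eq_0_iff[symmetric]) auto
  then show ?thesis using assms(3) by simp
qed

lemma projection:
  assumes "finite I" "finite J"
  shows "\<exists>c. \<forall>j\<in>J. ip I (\<lambda>i. u i - (\<Sum>j'\<in>J. c j' * f j' i)) (f j) = 0"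
  using assms(2)
proof (induction J arbitrary: u rule: finite_induct)
  case empty then show ?case by simp
next
  case (insert s J)
  obtain c1 where c1: "\<forall>j\<in>J. ip I (\<lambda>i. u i - (\<Sum>j'\<in>J. c1 j' * f j' i)) (f j) = 0"
    using insert.IH by blast
  obtain c2 where c2: "\<forall>j\<in>J. ip I (\<lambda>i. f s i - (\<Sum>j'\<in>J. c2 j' * f j' i)) (f j) = 0"
    using insert.IH by blast
  define r1 where "r1 = (\<lambda>i. u i - (\<Sum>j'\<in>J. c1 j' * f j' i))"
  define r2 where "r2 = (\<lambda>i. f s i - (\<Sum>j'\<in>J. c2 j' * f j' i))"
  have fs: "f s = (\<lambda>i. r2 i + (\<Sum>j'\<in>J. c2 j' * f j' i))" unfolding r2_def by auto
  show ?case
  proof (cases "ip I r2 r2 = 0")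
    case True
    have r20: "ip I g r2 = 0" for g
      using ip_self_zero[OF assms(1) True] unfolding ip_def by simp
    define c where "c = c1(s := 0)"
    have comb: "(\<lambda>i. u i - (\<Sum>j'\<in>insert s J. c j' * f j' i)) = r1"
      proof
      fix i
      have "(\<Sum>j'\<in>insert s J. c j' * f j' i) = (\<Sum>j'\<in>J. c j' * f j' i)"
        using insert.hyps unfolding c_def by simp
      also have "\<dots> = (\<Sum>j'\<in>J. c1 j' * f j' i)"
        using insert.hyps unfolding c_def by (intro sum.cong) auto
      finally show "u i - (\<Sum>j'\<in>insert s J. c j' * f j' i) = r1 i" unfolding r1_def by simp
    qed
    have "ip I r1 (f s) = 0"
      unfolding fs ip_add_right ip_sum_right r20 using c1 unfolding r1_def by simp
    then have "\<forall>j\<in>insert s J. ip I (\<lambda>i. u i - (\<Sum>j'\<in>insert s J. c j' * f j' i)) (f j) = 0"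
      using c1 unfolding comb unfolding r1_def by auto
    then show ?thesis by blast
  next
    case False
    define lam where "lam = ip I r1 r2 / ip I r2 r2"
    define c where "c = (\<lambda>j. c1 j - lam * c2 j)(s := lam)"
    have comb: "(\<lambda>i. u i - (\<Sum>j'\<in>insert s J. c j' * f j' i)) = (\<lambda>i. r1 i - lam * r2 i)"
    proof
      fix i
      have "(\<Sum>j'\<in>insert s J. c j' * f j' i) = lam * f s i + (\<Sum>j'\<in>J. (c1 j' - lam * c2 j') * f j' i)"
        using insert.hyps unfolding c_def by (auto intro!: sum.cong)
      also have "\<dots> = lam * f s i + (\<Sum>j'\<in>J. c1 j' * f j' i) - lam * (\<Sum>j'\<in>J. c2 j' * f j' i)"
        by (simp add: left_diff_distrib sum_subtractf sum_distrib_left mult.assoc)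
      finally show "u i - (\<Sum>j'\<in>insert s J. c j' * f j' i) = r1 i - lam * r2 i"
        unfolding r1_def r2_def by (simp add: algebra_simps)
    qed
    have J0: "ip I (\<lambda>i. r1 i - lam * r2 i) (f j) = 0" if "j \<in> J" for j
      unfolding ip_diff_left ip_scale_left using c1 c2 that unfolding r1_def r2_def by simp
    have "ip I (\<lambda>i. r1 i - lam * r2 i) (f s) = 0"
    proof -
      have "ip I (\<lambda>i. r1 i - lam * r2 i) (f s) = ip I (\<lambda>i. r1 i - lam * r2 i) r2"
        unfolding fs ip_add_right ip_sum_right using J0 by simp
      also have "\<dots> = ip I r1 r2 - lam * ip I r2 r2" unfolding ip_diff_left ip_scale_left ..
      also have "\<dots> = 0" unfolding lam_def using False by simp
      finally show ?thesis .
    qed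
    then have "\<forall>j\<in>insert s J. ip I (\<lambda>i. u i - (\<Sum>j'\<in>insert s J. c j' * f j' i)) (f j) = 0"
      using J0 unfolding comb by auto
    then show ?thesis by blast
  qed
qed

lemma span_zero: "in_real_span (\<lambda>i. 0) S"
  unfolding in_real_span_def by (rule exI[of _ "{}"]) auto

lemma span_base: "u \<in> S \<Longrightarrow> in_real_span u S"
  unfolding in_real_span_def by (rule exI[of _ "{u}"], rule exI[of _ "\<lambda>_. 1"]) auto

lemma span_add:
  assumes "in_real_span a S" "in_real_span b S"
  shows "in_real_span (\<lambda>i. a i + b i) S"
proof -
  obtain T1 c1 where 1: "finite T1" "T1 \<subseteq> S" "a = (\<lambda>i. \<Sum>u\<in>T1. c1 u * u i)"
    using assms(1) unfolding in_real_span_def by blast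
  obtain T2 c2 where 2: "finite T2" "T2 \<subseteq> S" "b = (\<lambda>i. \<Sum>u\<in>T2. c2 u * u i)"
    using assms(2) unfolding in_real_span_def by blast
  define c where "c u = (if u \<in> T1 then c1 u else 0) + (if u \<in> T2 then c2 u else 0)" for u
  have "a i + b i = (\<Sum>u\<in>T1 \<union> T2. c u * u i)" for i
  proof -
    have x: "a i = (\<Sum>u\<in>T1 \<union> T2. (if u \<in> T1 then c1 u else 0) * u i)"
      unfolding 1(3) using 1(1) 2(1) by (intro sum.mono_neutral_cong_left) auto
    have y: "b i = (\<Sum>u\<in>T1 \<union> T2. (if u \<in> T2 then c2 u else 0) * u i)"
      unfolding 2(3) using 1(1) 2(1) by (intro sum.mono_neutral_cong_left) auto
    show ?thesis unfolding x y c_def distrib_right sum.distrib ..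
  qed
  then show ?thesis unfolding in_real_span_def using 1 2
    by (intro exI[of _ "T1 \<union> T2"] exI[of _ c]) auto
qed

lemma span_scale:
  assumes "in_real_span a S"
  shows "in_real_span (\<lambda>i. x * a i) S"
proof -
  obtain T1 c1 where 1: "finite T1" "T1 \<subseteq> S" "a = (\<lambda>i. \<Sum>u\<in>T1. c1 u * u i)"
    using assms(1) unfolding in_real_span_def by blast
  show ?thesis unfolding in_real_span_def using 1
    by (intro exI[of _ T1] exI[of _ "\<lambda>u. x * c1 u"]) (auto simp: sum_distrib_left mult.assoc)
qed

lemma span_lincomb:
  assumes "finite J" "\<And>j. j \<in> J \<Longrightarrow> f j \<in> S"
  shows "in_real_span (\<lambda>i. \<Sum>j\<in>J. c j * f j i) S"
  using assms
proof (induction J rule: finite_induct)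
  case empty then show ?case using span_zero by simp
next
  case (insert x J)
  have "in_real_span (\<lambda>i. c x * f x i + (\<Sum>j\<in>J. c j * f j i)) S"
    using span_add[OF span_scale[OF span_base] insert.IH] insert.prems by auto
  then show ?case using insert.hyps by simp
qed



lemma polyfun_det:
  assumes "\<And>i j. i < m \<Longrightarrow> j < m \<Longrightarrow> polyfun d n (\<lambda>q. f q i j)"
  shows "polyfun d n (\<lambda>q. det (mat m m (\<lambda>(i,j). f q i j)))"
proof -
  have eq: "det (mat m m (\<lambda>(i,j). f q i j)) =
     (\<Sum>\<pi>\<in>{\<pi>. \<pi> permutes {0..<m}}. of_int (sign \<pi>) * (\<Prod>i\<in>{0..<m}. f q i (\<pi> i)))" for q
    unfolding det_def'[OF mat_carrier]
  proof (intro sum.cong refl arg_cong2[where f=times] prod.cong)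
    fix \<pi> i assume "\<pi> \<in> {\<pi>. \<pi> permutes {0..<m}}" "i \<in> {0..<m}"
    then have "\<pi> i < m" by (auto dest: permutes_in_image)
    then show "mat m m (\<lambda>(i, j). f q i j) $$ (i, \<pi> i) = f q i (\<pi> i)" using \<open>i \<in> _\<close> by simp
  qed
  show ?thesis unfolding eq
  proof (rule polyfun_sum)
    show "finite {\<pi>. \<pi> permutes {0..<m}}" by (rule finite_permutations) simp
  next
    fix \<pi> assume "\<pi> \<in> {\<pi>. \<pi> permutes {0..<m}}"
    then have "i < m \<Longrightarrow> \<pi> i < m" for i by (auto dest: permutes_in_image)
    then show "polyfun d n (\<lambda>q. of_int (sign \<pi>) * (\<Prod>i\<in>{0..<m}. f q i (\<pi> i)))"
      by (intro polyfun_mult polyfun_of_int polyfun_prod assms) auto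
  qed
qed

lemma generic_injective:
  fixes row :: "(nat \<Rightarrow> nat \<Rightarrow> real) \<Rightarrow> 'r \<Rightarrow> nat \<times> nat \<Rightarrow> real"
  assumes I: "finite I" and R: "finite R"
    and poly: "\<And>\<rho> i. \<rho> \<in> R \<Longrightarrow> i \<in> I \<Longrightarrow> polyfun d n (\<lambda>q. row q \<rho> i)"
    and gen: "generic d n p"
    and wit: "\<And>r. (\<forall>\<rho>\<in>R. ip I r (row qw \<rho>) = 0) \<Longrightarrow> (\<forall>i\<in>I. r i = 0)"
    and rp: "\<forall>\<rho>\<in>R. ip I r (row p \<rho>) = 0"
    and iI: "i \<in> I"
  shows "r i = 0"
proof -
  define m where "m = card I"
  obtain h where h: "bij_betw h {0..<m} I" unfolding m_def using ex_bij_betw_nat_finite[OF I] by blast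
  define g where "g q a b = (\<Sum>\<rho>\<in>R. row q \<rho> (h a) * row q \<rho> (h b))" for q a b
  define Gm where "Gm q = mat m m (\<lambda>(a,b). g q a b)" for q
  have hI: "a < m \<Longrightarrow> h a \<in> I" for a using h by (auto simp: bij_betw_def)
  have ipre: "ip I r' (row q \<rho>) = (\<Sum>a\<in>{0..<m}. r' (h a) * row q \<rho> (h a))" for r' q \<rho>
    unfolding ip_def using h by (rule sum.reindex_bij_betw[symmetric])
  have Gmv: "(Gm q *\<^sub>v v) $ a = (\<Sum>\<rho>\<in>R. row q \<rho> (h a) * (\<Sum>b\<in>{0..<m}. v $ b * row q \<rho> (h b)))"
    if "a < m" "v \<in> carrier_vec m" for q v a
  proof -
    have "(Gm q *\<^sub>v v) $ a = (\<Sum>b\<in>{0..<m}. g q a b * v $ b)"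
      using that unfolding Gm_def by (simp add: scalar_prod_def)
    also have "\<dots> = (\<Sum>\<rho>\<in>R. row q \<rho> (h a) * (\<Sum>b\<in>{0..<m}. v $ b * row q \<rho> (h b)))"
      unfolding g_def sum_distrib_left sum_distrib_right
      by (subst sum.swap) (simp add: mult_ac)
    finally show ?thesis .
  qed
  have polyF: "polyfun d n (\<lambda>q. det (Gm q))"
    unfolding Gm_def g_def
    by (rule polyfun_det, rule polyfun_sum[OF R], rule polyfun_mult) (auto intro!: poly hI)
  have wq: "det (Gm qw) \<noteq> 0"
  proof
    assume "det (Gm qw) = 0"
    then obtain v where v: "v \<in> carrier_vec m" "v \<noteq> 0\<^sub>v m" "Gm qw *\<^sub>v v = 0\<^sub>v m"
      using det_0_iff_vec_prod_zero_field[of "Gm qw" m] unfolding Gm_def by auto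
    define r' where "r' i = (if i \<in> I then v $ (inv_into {0..<m} h i) else 0)" for i
    have r'h: "a < m \<Longrightarrow> r' (h a) = v $ a" for a
      unfolding r'_def using h hI by (simp add: bij_betw_def)
    have ipv: "ip I r' (row qw \<rho>) = (\<Sum>b\<in>{0..<m}. v $ b * row qw \<rho> (h b))" for \<rho>
      unfolding ipre by (rule sum.cong) (auto simp: r'h)
    have "(\<Sum>\<rho>\<in>R. (ip I r' (row qw \<rho>))^2) = (\<Sum>a\<in>{0..<m}. v $ a * (Gm qw *\<^sub>v v) $ a)"
    proof -
      have "(\<Sum>a\<in>{0..<m}. v $ a * (Gm qw *\<^sub>v v) $ a) =
         (\<Sum>a\<in>{0..<m}. v $ a * (\<Sum>\<rho>\<in>R. row qw \<rho> (h a) * (\<Sum>b\<in>{0..<m}. v $ b * row qw \<rho> (h b))))"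
        using v(1) by (intro sum.cong refl) (simp add: Gmv)
      also have "\<dots> = (\<Sum>\<rho>\<in>R. (\<Sum>a\<in>{0..<m}. v $ a * row qw \<rho> (h a)) * (\<Sum>b\<in>{0..<m}. v $ b * row qw \<rho> (h b)))"
        unfolding sum_distrib_left sum_distrib_right by (subst sum.swap) (simp add: mult_ac)
      finally show ?thesis unfolding ipv power2_eq_square by simp
    qed
    also have "\<dots> = 0" using v(3) by simp
    finally have "\<forall>\<rho>\<in>R. (ip I r' (row qw \<rho>))^2 = 0"
      using R by (subst sum_nonneg_eq_0_iff[symmetric]) auto
    then have "\<forall>i\<in>I. r' i = 0" by (intro wit) simp
    then have "v = 0\<^sub>v m" using v(1) r'h hI by (intro eq_vecI) auto
    then show False using v(2) by simp
  qed
  have wp: "det (Gm p) \<noteq> 0" using polyfun_transfer[OF polyF gen wq] .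
  define v where "v = vec m (\<lambda>a. r (h a))"
  have "Gm p *\<^sub>v v = 0\<^sub>v m"
  proof (rule eq_vecI)
    fix a assume a: "a < dim_vec (0\<^sub>v m :: real vec)"
    have "(\<Sum>b\<in>{0..<m}. v $ b * row p \<rho> (h b)) = ip I r (row p \<rho>)" for \<rho>
      unfolding ipre v_def by (rule sum.cong) auto
    then show "(Gm p *\<^sub>v v) $ a = 0\<^sub>v m $ a" using a rp
      by (subst Gmv) (auto simp: v_def)
  qed (simp add: Gm_def)
  moreover have "Gm p \<in> carrier_mat m m" unfolding Gm_def by simp
  moreover have "v \<in> carrier_vec m" unfolding v_def by simp
  ultimately have "v = 0\<^sub>v m"
    using det_0_iff_vec_prod_zero_field[of "Gm p" m] wp by blast
  moreover obtain a where "a < m" "h a = i" using h iI by (force simp: bij_betw_def)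
  ultimately show ?thesis unfolding v_def by (metis index_vec index_zero_vec(1))
qed



definition triv :: "nat \<Rightarrow> nat set \<Rightarrow> (nat \<Rightarrow> nat \<Rightarrow> real) \<Rightarrow> nat \<times> nat \<Rightarrow> nat \<times> nat \<Rightarrow> real" where
  "triv d V q j i = (case j of (k,l) \<Rightarrow> case i of (v,k') \<Rightarrow>
     if v \<in> V \<and> k' < d then
       (if l < d then (if k' = k then q v l else 0) - (if k' = l then q v k else 0)
        else (if k' = k then 1 else 0))
     else 0)"

definition Jt :: "nat \<Rightarrow> (nat \<times> nat) set" where "Jt d = {0..<d} \<times> {0..<Suc d}"

lemma finite_Jt: "finite (Jt d)" unfolding Jt_def by auto

lemma sum_two:
  assumes "finite V" "x \<in> V" "y \<in> V" "x \<noteq> y" "\<And>v. v \<in> V \<Longrightarrow> v \<noteq> x \<Longrightarrow> v \<noteq> y \<Longrightarrow> g v = 0"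
  shows "(\<Sum>v\<in>V. g v) = g x + g y"
proof -
  have "(\<Sum>v\<in>V. g v) = (\<Sum>v\<in>{x,y}. g v)"
    using assms by (intro sum.mono_neutral_right) auto
  then show ?thesis using assms(4) by simp
qed

lemma ip_box_split: "ip (V \<times> {0..<d}) r g = (\<Sum>v\<in>V. \<Sum>k<d. r (v,k) * g (v,k))"
  unfolding ip_def by (simp add: sum.cartesian_product atLeast0LessThan)

lemma ip_rvec:
  assumes "finite V" "V \<subseteq> {0..<n}" "x \<in> V" "y \<in> V" "x \<noteq> y"
  shows "ip (V \<times> {0..<d}) r (rvec d n q x y) = (\<Sum>k<d. (q x k - q y k) * (r (x,k) - r (y,k)))"
proof -
  have "ip (V \<times> {0..<d}) r (rvec d n q x y) =
     (\<Sum>k<d. r (x,k) * rvec d n q x y (x,k)) + (\<Sum>k<d. r (y,k) * rvec d n q x y (y,k))"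
    unfolding ip_box_split
    by (rule sum_two) (use assms in \<open>auto simp: rvec_def\<close>)
  also have "\<dots> = (\<Sum>k<d. (q x k - q y k) * (r (x,k) - r (y,k)))"
    using assms unfolding sum.distrib[symmetric]
    by (intro sum.cong) (auto simp: rvec_def algebra_simps)
  finally show ?thesis .
qed

lemma ip_triv_rot:
  assumes "k < d" "l < d"
  shows "ip (V \<times> {0..<d}) r (triv d V q (k,l)) =
     (\<Sum>v\<in>V. r (v,k) * q v l) - (\<Sum>v\<in>V. r (v,l) * q v k)"
proof -
  have "ip (V \<times> {0..<d}) r (triv d V q (k,l)) =
     (\<Sum>v\<in>V. (\<Sum>k'<d. r (v,k') * (if k' = k then q v l else 0)) - (\<Sum>k'<d. r (v,k') * (if k' = l then q v k else 0)))"
    unfolding ip_box_split sum_subtractf[symmetric]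
    by (intro sum.cong refl) (auto simp: triv_def assms right_diff_distrib)
  also have "\<dots> = (\<Sum>v\<in>V. r (v,k) * q v l - r (v,l) * q v k)"
    using assms by (intro sum.cong refl) (simp add: if_distrib[of "\<lambda>x. _ * x"] sum.delta cong: if_cong)
  finally show ?thesis by (simp add: sum_subtractf)
qed

lemma ip_triv_trans:
  assumes "k < d"
  shows "ip (V \<times> {0..<d}) r (triv d V q (k,d)) = (\<Sum>v\<in>V. r (v,k))"
proof -
  have "ip (V \<times> {0..<d}) r (triv d V q (k,d)) = (\<Sum>v\<in>V. \<Sum>k'<d. if k' = k then r (v,k') else 0)"
    unfolding ip_box_split by (intro sum.cong refl) (auto simp: triv_def)
  also have "\<dots> = (\<Sum>v\<in>V. r (v,k))" using assms by simp
  finally show ?thesis .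
qed

lemma triv_rvec:
  assumes "finite V" "V \<subseteq> {0..<n}" "x \<in> V" "y \<in> V" "x \<noteq> y" "j \<in> Jt d"
  shows "ip (V \<times> {0..<d}) (triv d V q j) (rvec d n q x y) = 0"
proof -
  obtain k l where j: "j = (k,l)" "k < d" "l \<le> d" using assms(6) unfolding Jt_def by auto
  have "ip (V \<times> {0..<d}) (triv d V q j) (rvec d n q x y) =
     (\<Sum>k'<d. (q x k' - q y k') * (triv d V q j (x,k') - triv d V q j (y,k')))"
    using ip_rvec[OF assms(1-5)] .
  also have "\<dots> = 0"
  proof (cases "l < d")
    case True
    have "(\<Sum>k'<d. (q x k' - q y k') * (triv d V q j (x,k') - triv d V q j (y,k')))
       = (\<Sum>k'<d. (if k' = k then (q x k' - q y k') * (q x l - q y l) else 0)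
              - (if k' = l then (q x k' - q y k') * (q x k - q y k) else 0))"
      using assms True j by (intro sum.cong refl) (auto simp: triv_def algebra_simps)
    also have "\<dots> = 0" using True j by (simp add: sum_subtractf)
    finally show ?thesis .
  next
    case False
    then show ?thesis using assms j by (simp add: triv_def)
  qed
  finally show ?thesis .
qed

lemma polyfun_rvec:
  assumes "x < n" "y < n" "k < d"
  shows "polyfun d n (\<lambda>q. rvec d n q x y (v,k))"
proof -
  have b: "(x,k) \<in> coord_box d n" "(y,k) \<in> coord_box d n" using assms unfolding coord_box_def by auto
  show ?thesis
    using polyfun_sub[OF polyfun_var[OF b(1)] polyfun_var[OF b(2)]]
      polyfun_sub[OF polyfun_var[OF b(2)] polyfun_var[OF b(1)]] polyfun_of_int[of d n 0] assms
    unfolding rvec_def by (cases "v < n"; cases "v = x"; cases "v = y") auto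
qed

lemma polyfun_triv:
  assumes "v < n" "k' < d" "j \<in> Jt d"
  shows "polyfun d n (\<lambda>q. triv d V q j (v,k'))"
proof -
  obtain k l where j: "j = (k,l)" "k < d" "l \<le> d" using assms(3) unfolding Jt_def by auto
  have b: "(v,k) \<in> coord_box d n" "l < d \<Longrightarrow> (v,l) \<in> coord_box d n"
    using assms j unfolding coord_box_def by auto
  have z: "polyfun d n (\<lambda>q. 0)" "polyfun d n (\<lambda>q. 1)"
    using polyfun_of_int[of d n 0] polyfun_of_int[of d n 1] by auto
  show ?thesis
    using polyfun_var[OF b(1)] polyfun_var[OF b(2)] z polyfun_neg[OF polyfun_var[OF b(1)]]
      polyfun_sub[OF polyfun_var[OF b(2)] polyfun_var[OF b(1)]] assms j
    unfolding triv_def by (cases "v \<in> V"; cases "l < d"; cases "k' = k"; cases "k' = l") auto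
qed

lemma rvec_outside:
  assumes "x \<in> V" "y \<in> V" "i \<notin> V \<times> {0..<d}"
  shows "rvec d n q x y i = 0"
  using assms unfolding rvec_def by (cases i) auto

text \<open>The main consequence of genericity: infinitesimal rigidity transfers.\<close>

lemma main_span:
  assumes gen: "generic d n p"
    and V: "finite V" "V \<subseteq> {0..<n}"
    and Ed: "finite Ed" "Ed \<subseteq> {(x,y). x \<in> V \<and> y \<in> V \<and> x \<noteq> y}"
    and wit: "\<And>r. (\<forall>e\<in>Ed. ip (V \<times> {0..<d}) r (rvec d n q0 (fst e) (snd e)) = 0) \<Longrightarrow>
                   (\<forall>j\<in>Jt d. ip (V \<times> {0..<d}) r (triv d V q0 j) = 0) \<Longrightarrow>
                   (\<forall>i\<in>V \<times> {0..<d}. r i = 0)"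
    and xy: "x0 \<in> V" "y0 \<in> V" "x0 \<noteq> y0"
  shows "in_real_span (rvec d n p x0 y0) ((\<lambda>e. rvec d n p (fst e) (snd e)) ` Ed)"
proof -
  define I where "I = V \<times> {0..<d}"
  have I: "finite I" unfolding I_def using V by auto
  define row where "row q \<rho> = (case \<rho> of Inl e \<Rightarrow> rvec d n q (fst e) (snd e) | Inr j \<Rightarrow> triv d V q j)"
    for q and \<rho> :: "(nat \<times> nat) + (nat \<times> nat)"
  define R where "R = Inl ` Ed \<union> Inr ` Jt d"
  have inj: "\<forall>i\<in>I. r i = 0" if "\<forall>\<rho>\<in>R. ip I r (row p \<rho>) = 0" for r
  proof
    fix i assume "i \<in> I"
    show "r i = 0"
    proof (rule generic_injective[where row=row and R=R and qw=q0, OF I _ _ gen _ that \<open>i \<in> I\<close>])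
      show "finite R" unfolding R_def using Ed finite_Jt by auto
    next
      fix \<rho> i assume "\<rho> \<in> R" "i \<in> I"
      then obtain v k where vk: "i = (v,k)" "v < n" "k < d" using V unfolding I_def by auto
      show "polyfun d n (\<lambda>q. row q \<rho> i)"
      proof (cases \<rho>)
        case (Inl e)
        then have "e \<in> Ed" using \<open>\<rho> \<in> R\<close> unfolding R_def by auto
        then have "fst e \<in> V" "snd e \<in> V" using Ed by auto
        then have "fst e < n" "snd e < n" using V by auto
        then show ?thesis unfolding Inl row_def vk using vk by (simp add: polyfun_rvec)
      next
        case (Inr j)
        then have "j \<in> Jt d" using \<open>\<rho> \<in> R\<close> unfolding R_def by auto
        then show ?thesis unfolding Inr row_def vk using vk by (simp add: polyfun_triv)
      qed
    next
      fix r assume "\<forall>\<rho>\<in>R. ip I r (row q0 \<rho>) = 0"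
      then have h1: "\<forall>e\<in>Ed. ip I r (row q0 (Inl e)) = 0" and h2: "\<forall>j\<in>Jt d. ip I r (row q0 (Inr j)) = 0"
        unfolding R_def by auto
      show "\<forall>i\<in>I. r i = 0" unfolding I_def
        by (rule wit) (use h1 h2 in \<open>auto simp: row_def I_def\<close>)
    qed
  qed
  define f where "f e = rvec d n p (fst e) (snd e)" for e
  define w where "w = rvec d n p x0 y0"
  obtain c where c: "\<forall>e\<in>Ed. ip I (\<lambda>i. w i - (\<Sum>e'\<in>Ed. c e' * f e' i)) (f e) = 0"
    using projection[OF I Ed(1)] by blast
  define r where "r = (\<lambda>i. w i - (\<Sum>e'\<in>Ed. c e' * f e' i))"
  obtain c' where c': "\<forall>j\<in>Jt d. ip I (\<lambda>i. r i - (\<Sum>j'\<in>Jt d. c' j' * triv d V p j' i)) (triv d V p j) = 0"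
    using projection[OF I finite_Jt] by blast
  define r' where "r' = (\<lambda>i. r i - (\<Sum>j'\<in>Jt d. c' j' * triv d V p j' i))"
  have tf: "ip I (triv d V p j) (f e) = 0" if "j \<in> Jt d" "e \<in> Ed" for j e
    unfolding I_def f_def using that Ed V by (intro triv_rvec) auto
  have "ip I r' (f e) = 0" if "e \<in> Ed" for e
    unfolding r'_def ip_diff_left ip_sum_left using c that tf unfolding r_def by simp
  then have r'0: "\<forall>i\<in>I. r' i = 0"
    using c' by (intro inj) (auto simp: R_def row_def r'_def f_def)
  have "ip I r w = 0"
  proof -
    have rr: "r = (\<lambda>i. (\<Sum>j'\<in>Jt d. c' j' * triv d V p j' i) + r' i)" unfolding r'_def by auto
    have "ip I r' w = 0" using r'0 unfolding ip_def by simp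
    moreover have "ip I (triv d V p j) w = 0" if "j \<in> Jt d" for j
      unfolding I_def w_def using that xy V by (intro triv_rvec) auto
    ultimately show ?thesis
      unfolding rr ip_comm[of I _ w] ip_add_right ip_sum_right by (simp add: ip_comm)
  qed
  then have "ip I r r = 0"
    unfolding r_def ip_diff_right ip_sum_right using c unfolding r_def by simp
  then have r0: "\<forall>i\<in>I. r i = 0" using ip_self_zero[OF I] by blast
  have "w = (\<lambda>i. \<Sum>e\<in>Ed. c e * f e i)"
  proof
    fix i
    show "w i = (\<Sum>e\<in>Ed. c e * f e i)"
    proof (cases "i \<in> I")
      case True then show ?thesis using r0 unfolding r_def by simp
    next
      case False
      have "w i = 0" unfolding w_def using False xy unfolding I_def by (intro rvec_outside)
      moreover have "f e i = 0" if "e \<in> Ed" for e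
      proof -
        have "fst e \<in> V" "snd e \<in> V" using that Ed by auto
        then show ?thesis unfolding f_def using False unfolding I_def by (intro rvec_outside)
      qed
      ultimately show ?thesis by simp
    qed
  qed
  then show ?thesis unfolding w_def f_def using Ed(1) by (auto intro!: span_lincomb)
qed



lemma sum_ind: "(\<Sum>m<(d::nat). (if m = k then a else 0) * g m) = (if k < d then a * g k else (0::real))"
proof -
  have "(\<Sum>m<d. (if m = k then a else 0) * g m) = (\<Sum>m<d. if m = k then a * g k else 0)"
    by (intro sum.cong) auto
  then show ?thesis by (simp add: sum.delta sum.delta')
qed

lemma skew_quad:
  assumes "\<forall>k<d. \<forall>l<d. S k l = - S l k"
  shows "(\<Sum>m<(d::nat). x m * (\<Sum>l<d. S m l * x l)) = (0::real)"
proof -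
  define T where "T = (\<Sum>m<d. \<Sum>l<d. x m * S m l * x l)"
  have "T = (\<Sum>l<d. \<Sum>m<d. x m * S m l * x l)" unfolding T_def by (rule sum.swap)
  also have "\<dots> = (\<Sum>l<d. \<Sum>m<d. - (x l * S l m * x m))"
  proof (rule sum.cong[OF refl], rule sum.cong[OF refl])
    fix l m assume "l \<in> {..<d}" "m \<in> {..<d}"
    then have "m < d" "l < d" by auto
    then have "S m l = - S l m" using assms by blast
    then show "x m * S m l * x l = - (x l * S l m * x m)" by (simp add: mult_ac)
  qed
  also have "\<dots> = - T" unfolding T_def by (simp add: sum_negf)
  finally have "T = 0" by simp
  then show ?thesis unfolding T_def by (simp add: sum_distrib_left mult_ac)
qed

lemma frame:
  fixes Q R :: "nat \<Rightarrow> nat \<Rightarrow> real"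
  assumes edge: "\<And>x y. x \<in> X \<Longrightarrow> y \<in> X \<Longrightarrow> x \<noteq> y \<Longrightarrow> (\<Sum>k<d. (Q x k - Q y k) * (R x k - R y k)) = 0"
    and o: "zo \<in> X" "\<And>k. k < d \<Longrightarrow> Q zo k = 0"
    and F: "\<And>i. i < d \<Longrightarrow> F i \<in> X" "\<And>i k. i < d \<Longrightarrow> k < d \<Longrightarrow> Q (F i) k = (if k = i then lam i else 0)"
    and lam: "\<And>i. i < d \<Longrightarrow> lam i \<noteq> 0"
  shows "\<exists>S t. (\<forall>k<d. \<forall>l<d. S k l = - S l k) \<and> (\<forall>c\<in>X. \<forall>k<d. R c k = (\<Sum>l<d. S k l * Q c l) + t k)"
proof -
  have FQ: "Q (F i) k = (if k = i then lam i else 0)" if "i < d" "k < d" for i k using F(2) that .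
  have Fo: "F i \<noteq> zo" if "i < d" for i using FQ[OF that that] o(2)[OF that] lam[OF that] by auto
  have FF: "F i \<noteq> F j" if "i < d" "j < d" "i \<noteq> j" for i j
    using FQ[OF that(1) that(1)] FQ[OF that(2) that(1)] lam[OF that(1)] that by auto
  have diag: "R (F i) i = R zo i" if i: "i < d" for i
  proof -
    have "0 = (\<Sum>k<d. (Q zo k - Q (F i) k) * (R zo k - R (F i) k))"
      using edge[OF o(1) F(1)[OF i]] Fo[OF i] by auto
    also have "\<dots> = (\<Sum>k<d. (if k = i then - lam i else 0) * (R zo k - R (F i) k))"
      by (intro sum.cong refl) (auto simp: o(2) FQ[OF i])
    also have "\<dots> = - lam i * (R zo i - R (F i) i)" using i by (simp add: sum_ind)
    finally show ?thesis using lam[OF i] by simp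
  qed
  have offd: "lam k * (R (F k) k - R (F l) k) - lam l * (R (F k) l - R (F l) l) = 0"
    if kl: "k < d" "l < d" "k \<noteq> l" for k l
  proof -
    have "0 = (\<Sum>m<d. (Q (F k) m - Q (F l) m) * (R (F k) m - R (F l) m))"
      using edge[OF F(1)[OF kl(1)] F(1)[OF kl(2)] FF[OF kl]] by simp
    also have "\<dots> = (\<Sum>m<d. (if m = k then lam k else 0) * (R (F k) m - R (F l) m))
                   - (\<Sum>m<d. (if m = l then lam l else 0) * (R (F k) m - R (F l) m))"
      unfolding sum_subtractf[symmetric]
      by (intro sum.cong refl) (auto simp: FQ kl left_diff_distrib)
    also have "\<dots> = lam k * (R (F k) k - R (F l) k) - lam l * (R (F k) l - R (F l) l)"
      using kl by (simp add: sum_ind)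
    finally show ?thesis by simp
  qed
  define S where "S k l = (R (F l) k - R zo k) / lam l" for k l
  define t where "t k = R zo k" for k
  have skew: "\<forall>k<d. \<forall>l<d. S k l = - S l k"
  proof (intro allI impI)
    fix k l assume kl: "k < d" "l < d"
    show "S k l = - S l k"
    proof (cases "k = l")
      case True then show ?thesis unfolding S_def using diag kl by simp
    next
      case False
      have e: "lam k * (R zo k - R (F l) k) - lam l * (R (F k) l - R zo l) = 0"
        using offd[OF kl False] diag kl by simp
      show ?thesis unfolding S_def using lam[OF kl(1)] lam[OF kl(2)] e
        by (simp add: field_simps)
    qed
  qed
  have SF: "S m i * lam i = R (F i) m - R zo m" if "i < d" for m i
    unfolding S_def using lam[OF that] by simp
  have main: "R c k = (\<Sum>l<d. S k l * Q c l) + t k" if c: "c \<in> X" and k: "k < d" for c k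
  proof -
    consider "c = zo" | "c = F k" | "c \<noteq> zo" "c \<noteq> F k" by blast
    then show ?thesis
    proof cases
      case 1 then show ?thesis unfolding t_def by (simp add: o(2))
    next
      case 2
      have "(\<Sum>l<d. S k l * Q c l) = (\<Sum>l<d. (if l = k then lam k else 0) * S k l)"
        unfolding 2 by (intro sum.cong refl) (auto simp: FQ k)
      also have "\<dots> = R (F k) k - R zo k" using k SF[OF k, of k] by (subst sum_ind) (simp add: mult.commute)
      finally show ?thesis unfolding t_def 2 by simp
    next
      case 3
      define u where "u m = R c m - (\<Sum>l<d. S m l * Q c l) - R zo m" for m
      have e1: "(\<Sum>m<d. Q c m * u m) = 0"
      proof -
        have "0 = (\<Sum>m<d. (Q c m - Q zo m) * (R c m - R zo m))" using edge[OF c o(1) 3(1)] by simp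
        also have "\<dots> = (\<Sum>m<d. Q c m * u m) + (\<Sum>m<d. Q c m * (\<Sum>l<d. S m l * Q c l))"
          unfolding sum.distrib[symmetric] u_def by (intro sum.cong refl) (auto simp: o(2) algebra_simps)
        finally show ?thesis using skew_quad[OF skew] by simp
      qed
      define w where "w l = Q c l - (if l = k then lam k else 0)" for l
      have e2: "(\<Sum>m<d. w m * u m) = 0"
      proof -
        have "0 = (\<Sum>m<d. (Q c m - Q (F k) m) * (R c m - R (F k) m))" using edge[OF c F(1)[OF k] 3(2)] by simp
        also have "\<dots> = (\<Sum>m<d. w m * u m) + (\<Sum>m<d. w m * (\<Sum>l<d. S m l * w l))"
        proof -
          have "R c m - R (F k) m = u m + (\<Sum>l<d. S m l * w l)" if "m < d" for m
          proof -
            have "(\<Sum>l<d. S m l * w l) = (\<Sum>l<d. S m l * Q c l) - (\<Sum>l<d. (if l = k then lam k else 0) * S m l)"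
              unfolding w_def sum_subtractf[symmetric] by (intro sum.cong refl) (auto simp: algebra_simps)
            also have "\<dots> = (\<Sum>l<d. S m l * Q c l) - (R (F k) m - R zo m)"
              using k SF[OF k, of m] by (subst sum_ind) (simp add: mult.commute)
            finally show ?thesis unfolding u_def by simp
          qed
          then show ?thesis unfolding sum.distrib[symmetric]
            by (intro sum.cong refl) (auto simp: w_def FQ k algebra_simps)
        qed
        finally show ?thesis using skew_quad[OF skew] by simp
      qed
      have "(\<Sum>m<d. w m * u m) = (\<Sum>m<d. Q c m * u m) - (\<Sum>m<d. (if m = k then lam k else 0) * u m)"
        unfolding w_def sum_subtractf[symmetric] by (intro sum.cong refl) (auto simp: algebra_simps)
      then have "lam k * u k = 0" using e1 e2 k by (simp add: sum_ind)
      then have "u k = 0" using lam[OF k] by simp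
      then show ?thesis unfolding u_def t_def by simp
    qed
  qed
  show ?thesis using skew main by blast
qed



lemma card_P: "card {(i,j). i \<le> j \<and> j < (d::nat)} = (d+1) choose 2"
proof (induction d)
  case 0 then show ?case by simp
next
  case (Suc d)
  have eq: "{(i,j). i \<le> j \<and> j < Suc d} = {(i,j). i \<le> j \<and> j < d} \<union> (\<lambda>i. (i,d)) ` {0..d}"
    by auto
  have fin: "finite {(i,j). i \<le> j \<and> j < (d::nat)}"
    by (rule finite_subset[of _ "{0..<d} \<times> {0..<d}"]) auto
  have "card {(i,j). i \<le> j \<and> j < Suc d} = card {(i,j). i \<le> j \<and> j < d} + card ((\<lambda>i. (i,d)) ` {0..d})"
    unfolding eq using fin by (intro card_Un_disjoint) auto
  also have "card ((\<lambda>i. (i,d)) ` {0..d}) = Suc d" by (subst card_image) (auto intro: inj_onI)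
  moreover have "Suc (Suc d) choose 2 = (Suc d choose 1) + (Suc d choose 2)"
    using binomial_Suc_Suc[of "Suc d" 1] by (simp add: numeral_2_eq_2)
  ultimately show ?case using Suc.IH by simp
qed

lemma sum_unit: "k < (d::nat) \<Longrightarrow> (\<Sum>l<d. f l * (if l = k then 1 else 0)) = (f k :: real)"
proof -
  assume k: "k < d"
  have "(\<Sum>l<d. f l * (if l = k then 1 else 0)) = (\<Sum>l<d. if l = k then f k else 0)"
    by (intro sum.cong) auto
  then show ?thesis using k by simp
qed

lemma sum_unit2: "k < (d::nat) \<Longrightarrow> (\<Sum>l<d. (if l = k then 1 else 0) * f l) = (f k :: real)"
  using sum_unit[of k d f] by (simp add: mult.commute)

lemma match_eq:
  fixes SA SB :: "nat \<Rightarrow> nat \<Rightarrow> real"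
  assumes skB: "\<forall>k<d. \<forall>l<d. SB k l = - SB l k"
    and h: "(\<Sum>k<(d::nat). (x k - y k) * (((\<Sum>l<d. SA k l * x l) + tA k) - ((\<Sum>l<d. SB k l * y l) + tB k))) = 0"
  shows "(\<Sum>k<d. (x k - y k) * ((\<Sum>l<d. (SA k l - SB k l) * x l) + (tA k - tB k))) = 0"
proof -
  have "(\<Sum>k<d. (x k - y k) * (((\<Sum>l<d. SA k l * x l) + tA k) - ((\<Sum>l<d. SB k l * y l) + tB k)))
     = (\<Sum>k<d. (x k - y k) * ((\<Sum>l<d. (SA k l - SB k l) * x l) + (tA k - tB k)))
       + (\<Sum>k<d. (x k - y k) * (\<Sum>l<d. SB k l * (x l - y l)))"
    unfolding sum.distrib[symmetric]
    by (intro sum.cong refl) (simp add: algebra_simps sum_subtractf sum.distrib)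
  then show ?thesis using h skew_quad[OF skB, of "\<lambda>l. x l - y l"] by simp
qed

lemma skew_sym_sum:
  fixes S X :: "nat \<Rightarrow> nat \<Rightarrow> real"
  assumes "\<forall>k<d. \<forall>l<d. S k l = - S l k" "\<forall>k<d. \<forall>l<d. X k l = X l k"
  shows "(\<Sum>k<(d::nat). \<Sum>l<d. S k l * X k l) = 0"
proof -
  define T where "T = (\<Sum>k<d. \<Sum>l<d. S k l * X k l)"
  have "T = (\<Sum>l<d. \<Sum>k<d. S k l * X k l)" unfolding T_def by (rule sum.swap)
  also have "\<dots> = (\<Sum>l<d. \<Sum>k<d. - (S l k * X l k))"
  proof (rule sum.cong[OF refl], rule sum.cong[OF refl])
    fix l k assume "l \<in> {..<d}" "k \<in> {..<d}"
    then have "k < d" "l < d" by auto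
    then have "S k l = - S l k" "X k l = X l k" using assms by blast+
    then show "S k l * X k l = - (S l k * X l k)" by simp
  qed
  also have "\<dots> = - T" unfolding T_def by (simp add: sum_negf)
  finally show ?thesis unfolding T_def by simp
qed

lemma trivial_orth_zero:
  fixes S :: "nat \<Rightarrow> nat \<Rightarrow> real"
  assumes V: "finite V"
    and skew: "\<forall>k<d. \<forall>l<d. S k l = - S l k"
    and rep: "\<And>c k. c \<in> V \<Longrightarrow> k < d \<Longrightarrow> r (c,k) = (\<Sum>l<d. S k l * q c l) + t k"
    and orth: "\<forall>j\<in>Jt d. ip (V \<times> {0..<d}) r (triv d V q j) = 0"
    and i: "i \<in> V \<times> {0..<d}"
  shows "r i = 0"
proof -
  define X where "X k l = (\<Sum>v\<in>V. r (v,k) * q v l)" for k l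
  define Y where "Y k = (\<Sum>v\<in>V. r (v,k))" for k
  have Xs: "\<forall>k<d. \<forall>l<d. X k l = X l k"
  proof (intro allI impI)
    fix k l assume "k < d" "l < d"
    then have "(k,l) \<in> Jt d" unfolding Jt_def by auto
    then show "X k l = X l k" using orth ip_triv_rot[OF \<open>k<d\<close> \<open>l<d\<close>, of V r q] unfolding X_def by simp
  qed
  have Y0: "Y k = 0" if "k < d" for k
  proof -
    have "(k,d) \<in> Jt d" using that unfolding Jt_def by auto
    then show ?thesis using orth ip_triv_trans[OF that, of V r q] unfolding Y_def by simp
  qed
  have "ip (V \<times> {0..<d}) r r = (\<Sum>v\<in>V. \<Sum>k<d. r (v,k) * ((\<Sum>l<d. S k l * q v l) + t k))"
    unfolding ip_box_split using rep by (intro sum.cong refl) auto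
  also have "\<dots> = (\<Sum>v\<in>V. \<Sum>k<d. \<Sum>l<d. S k l * (r (v,k) * q v l)) + (\<Sum>v\<in>V. \<Sum>k<d. t k * r (v,k))"
    unfolding sum.distrib[symmetric]
    by (intro sum.cong refl) (simp add: distrib_left sum_distrib_left mult_ac)
  also have "(\<Sum>v\<in>V. \<Sum>k<d. \<Sum>l<d. S k l * (r (v,k) * q v l)) = (\<Sum>k<d. \<Sum>l<d. \<Sum>v\<in>V. S k l * (r (v,k) * q v l))"
  proof -
    have "(\<Sum>v\<in>V. \<Sum>k<d. \<Sum>l<d. S k l * (r (v,k) * q v l)) = (\<Sum>k<d. \<Sum>v\<in>V. \<Sum>l<d. S k l * (r (v,k) * q v l))"
      by (rule sum.swap)
    also have "\<dots> = (\<Sum>k<d. \<Sum>l<d. \<Sum>v\<in>V. S k l * (r (v,k) * q v l))"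
      by (rule sum.cong[OF refl], rule sum.swap)
    finally show ?thesis .
  qed
  also have "\<dots> = (\<Sum>k<d. \<Sum>l<d. S k l * X k l)"
    unfolding X_def sum_distrib_left ..
  also have "(\<Sum>v\<in>V. \<Sum>k<d. t k * r (v,k)) = (\<Sum>k<d. t k * Y k)"
    unfolding Y_def sum_distrib_left by (rule sum.swap)
  also have "\<dots> = 0" using Y0 by simp
  also have "(\<Sum>k<d. \<Sum>l<d. S k l * X k l) = 0" using skew_sym_sum[OF skew Xs] by simp
  finally have "ip (V \<times> {0..<d}) r r = 0" by simp
  moreover have "finite (V \<times> {0..<d})" using V by simp
  ultimately show ?thesis using ip_self_zero i by blast
qed



definition wit_prop :: "nat \<Rightarrow> nat set \<Rightarrow> nat set set \<Rightarrow> (nat \<Rightarrow> nat \<Rightarrow> real) \<Rightarrow> bool" where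
  "wit_prop d V G q \<longleftrightarrow> (\<forall>r.
     (\<forall>x\<in>V. \<forall>y\<in>V. x \<noteq> y \<longrightarrow> {x,y} \<in> G \<longrightarrow> (\<Sum>k<d. (q x k - q y k) * (r (x,k) - r (y,k))) = 0) \<longrightarrow>
     (\<forall>j\<in>Jt d. ip (V \<times> {0..<d}) r (triv d V q j) = 0) \<longrightarrow>
     (\<forall>i\<in>V \<times> {0..<d}. r i = 0))"

lemma witness1:
  assumes V: "finite (A \<union> B)"
    and cA: "is_clique G A" and cB: "is_clique G B"
    and ab: "a \<in> A" "b \<in> B" "a \<noteq> b" "{a,b} \<in> G"
  shows "wit_prop 1 (A \<union> B) G (\<lambda>v k. real v)"
  unfolding wit_prop_def
proof (intro allI impI)
  fix r :: "nat \<times> nat \<Rightarrow> real"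
  assume e: "\<forall>x\<in>A \<union> B. \<forall>y\<in>A \<union> B. x \<noteq> y \<longrightarrow> {x,y} \<in> G \<longrightarrow>
      (\<Sum>k<1. (real x - real y) * (r (x,k) - r (y,k))) = 0"
    and t: "\<forall>j\<in>Jt 1. ip ((A \<union> B) \<times> {0..<1}) r (triv 1 (A \<union> B) (\<lambda>v k. real v) j) = 0"
  have eq: "r (x,0) = r (y,0)" if "x \<in> A \<union> B" "y \<in> A \<union> B" "{x,y} \<in> G" for x y
  proof (cases "x = y")
    case False
    then have "(real x - real y) * (r (x,0) - r (y,0)) = 0" using e that by auto
    then show ?thesis using False by simp
  qed simp
  have all: "r (v,0) = r (a,0)" if "v \<in> A \<union> B" for v
  proof (cases "v \<in> A")
    case True
    then show ?thesis using eq[of v a] cA ab unfolding is_clique_def by (cases "v = a") auto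
  next
    case False
    then have "v \<in> B" using that by auto
    then have "r (v,0) = r (b,0)" using eq[of v b] cB ab unfolding is_clique_def by (cases "v = b") auto
    also have "\<dots> = r (a,0)" using eq[of b a] ab by (auto simp: insert_commute)
    finally show ?thesis .
  qed
  have "(0,1) \<in> Jt 1" unfolding Jt_def by auto
  then have "ip ((A \<union> B) \<times> {0..<1}) r (triv 1 (A \<union> B) (\<lambda>v k. real v) (0,1)) = 0" using t by blast
  then have "(\<Sum>v\<in>A \<union> B. r (v,0)) = 0"
    using ip_triv_trans[where k=0 and d=1 and V="A \<union> B" and r=r and q="\<lambda>v k. real v"] by simp
  then have "real (card (A \<union> B)) * r (a,0) = 0" using all by simp
  moreover have "card (A \<union> B) > 0" using V ab by (auto simp: card_gt_0_iff)
  ultimately have "r (a,0) = 0" by simp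
  then show "\<forall>i\<in>(A \<union> B) \<times> {0..<1}. r i = 0" using all by auto
qed



definition posA :: "nat \<times> nat \<Rightarrow> nat \<Rightarrow> real" where
  "posA lb k = (if fst lb = snd lb \<and> fst lb = 0 then 0 else if k = fst lb then 1 else 0)"
definition posB :: "nat \<times> nat \<Rightarrow> nat \<Rightarrow> real" where
  "posB lb k = (if fst lb = snd lb then (if fst lb = 0 \<and> k = 0 then -1 else 0) else if k = snd lb then 1 else 0)"

lemma witness2:
  assumes d2: "2 \<le> d"
    and V: "finite (A \<union> B)"
    and AB: "A \<inter> B = {}"
    and cA: "is_clique G A" and cB: "is_clique G B"
    and M: "M \<subseteq> G" "card M = (d+1) choose 2" "\<forall>e\<in>M. \<exists>a\<in>A. \<exists>b\<in>B. e = {a,b}"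
           "\<forall>e\<in>M. \<forall>e'\<in>M. e \<noteq> e' \<longrightarrow> e \<inter> e' = {}"
  shows "\<exists>q. wit_prop d (A \<union> B) G q"
proof -
  define P where "P = {(i,j). i \<le> j \<and> j < (d::nat)}"
  have finP: "finite P" unfolding P_def
    by (rule finite_subset[of _ "{0..<d} \<times> {0..<d}"]) auto
  have "card M > 0" using M(2) d2 by simp
  then have finM: "finite M" using card_ge_0_finite by blast
  have "card P = card M" unfolding P_def card_P M(2) ..
  then obtain \<beta> where \<beta>: "bij_betw \<beta> P M" using finite_same_card_bij[OF finP finM] by blast
  have "\<forall>e\<in>M. \<exists>ab. fst ab \<in> A \<and> snd ab \<in> B \<and> e = {fst ab, snd ab}" using M(3) by fastforce
  then obtain f where f: "\<forall>e\<in>M. fst (f e) \<in> A \<and> snd (f e) \<in> B \<and> e = {fst (f e), snd (f e)}"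
    by metis
  define aV where "aV lb = fst (f (\<beta> lb))" for lb
  define bV where "bV lb = snd (f (\<beta> lb))" for lb
  have \<beta>M: "lb \<in> P \<Longrightarrow> \<beta> lb \<in> M" for lb using \<beta> by (auto simp: bij_betw_def)
  have aA: "lb \<in> P \<Longrightarrow> aV lb \<in> A" and bB: "lb \<in> P \<Longrightarrow> bV lb \<in> B"
    and eab: "lb \<in> P \<Longrightarrow> \<beta> lb = {aV lb, bV lb}" for lb
    using f \<beta>M unfolding aV_def bV_def by auto
  have abG: "lb \<in> P \<Longrightarrow> {aV lb, bV lb} \<in> G" for lb using eab \<beta>M M(1) by (metis subsetD)
  have abne: "aV lb \<noteq> bV lb" if "lb \<in> P" for lb
  proof
    assume eq: "aV lb = bV lb"
    have "aV lb \<in> A" "bV lb \<in> B" using aA bB that by auto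
    then have "aV lb \<in> A \<inter> B" using eq by simp
    then show False using AB by simp
  qed
  have \<beta>inj: "lb \<in> P \<Longrightarrow> lb' \<in> P \<Longrightarrow> \<beta> lb = \<beta> lb' \<Longrightarrow> lb = lb'" for lb lb'
    using \<beta> unfolding bij_betw_def inj_on_def by blast
  have aInj: "lb = lb'" if "lb \<in> P" "lb' \<in> P" "aV lb = aV lb'" for lb lb'
  proof (rule ccontr)
    assume "lb \<noteq> lb'"
    then have "\<beta> lb \<noteq> \<beta> lb'" using \<beta>inj that by blast
    then have "\<beta> lb \<inter> \<beta> lb' = {}" using M(4) \<beta>M that by blast
    then show False using eab that by auto
  qed
  have bInj: "lb = lb'" if "lb \<in> P" "lb' \<in> P" "bV lb = bV lb'" for lb lb'
  proof (rule ccontr)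
    assume "lb \<noteq> lb'"
    then have "\<beta> lb \<noteq> \<beta> lb'" using \<beta>inj that by blast
    then have "\<beta> lb \<inter> \<beta> lb' = {}" using M(4) \<beta>M that by blast
    then show False using eab that by auto
  qed
  define q where "q v k = (if \<exists>lb\<in>P. aV lb = v then posA (SOME lb. lb \<in> P \<and> aV lb = v) k
      else if \<exists>lb\<in>P. bV lb = v then posB (SOME lb. lb \<in> P \<and> bV lb = v) k else 0)" for v k
  have qA: "q (aV lb) k = posA lb k" if "lb \<in> P" for lb k
  proof -
    have "(SOME lb'. lb' \<in> P \<and> aV lb' = aV lb) = lb"
      using that aInj by (intro some_equality) auto
    then show ?thesis unfolding q_def using that by auto
  qed
  have qB: "q (bV lb) k = posB lb k" if "lb \<in> P" for lb k
  proof -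
    have "(SOME lb'. lb' \<in> P \<and> bV lb' = bV lb) = lb"
      using that bInj by (intro some_equality) auto
    moreover have "\<not> (\<exists>lb'\<in>P. aV lb' = bV lb)"
    proof
      assume "\<exists>lb'\<in>P. aV lb' = bV lb"
      then obtain lb' where lb': "lb' \<in> P" "aV lb' = bV lb" by blast
      have "aV lb' \<in> A" using aA[OF lb'(1)] .
      moreover have "bV lb \<in> B" using bB[OF that] .
      ultimately have "bV lb \<in> A \<inter> B" using lb'(2) by simp
      then show False using AB by simp
    qed
    ultimately show ?thesis unfolding q_def using that by auto
  qed
  have P00: "(0,0) \<in> P" and P01: "(0,1) \<in> P" and P11: "(1,1) \<in> P" using d2 unfolding P_def by auto
  have Pii: "i < d \<Longrightarrow> (i,i) \<in> P" and P0j: "j < d \<Longrightarrow> (0,j) \<in> P" for i j unfolding P_def by auto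
  show ?thesis
  proof (rule exI[of _ q], unfold wit_prop_def, intro allI impI)
    fix r :: "nat \<times> nat \<Rightarrow> real"
    assume e: "\<forall>x\<in>A \<union> B. \<forall>y\<in>A \<union> B. x \<noteq> y \<longrightarrow> {x,y} \<in> G \<longrightarrow>
      (\<Sum>k<d. (q x k - q y k) * (r (x,k) - r (y,k))) = 0"
      and t: "\<forall>j\<in>Jt d. ip ((A \<union> B) \<times> {0..<d}) r (triv d (A \<union> B) q j) = 0"
    define R where "R v k = r (v,k)" for v k
    have eR: "(\<Sum>k<d. (q x k - q y k) * (R x k - R y k)) = 0"
      if "x \<in> A \<union> B" "y \<in> A \<union> B" "x \<noteq> y" "{x,y} \<in> G" for x y
      using e that unfolding R_def by blast
    have "\<exists>S t. (\<forall>k<d. \<forall>l<d. S k l = - S l k) \<and> (\<forall>c\<in>A. \<forall>k<d. R c k = (\<Sum>l<d. S k l * q c l) + t k)"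
    proof (rule frame[where zo="aV (0,0)" and F="\<lambda>i. if i = 0 then aV (0,1) else aV (i,i)" and lam="\<lambda>_. 1"])
      show "\<And>x y. x \<in> A \<Longrightarrow> y \<in> A \<Longrightarrow> x \<noteq> y \<Longrightarrow> (\<Sum>k<d. (q x k - q y k) * (R x k - R y k)) = 0"
        using eR cA unfolding is_clique_def by blast
      show "aV (0,0) \<in> A" using aA P00 by blast
      show "\<And>k. k < d \<Longrightarrow> q (aV (0,0)) k = 0" using qA[OF P00] by (simp add: posA_def)
      show "\<And>i. i < d \<Longrightarrow> (if i = 0 then aV (0,1) else aV (i,i)) \<in> A" using aA P01 Pii by auto
      show "\<And>i k. i < d \<Longrightarrow> k < d \<Longrightarrow> q (if i = 0 then aV (0,1) else aV (i,i)) k = (if k = i then 1 else 0)"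
        using qA P01 Pii by (auto simp: posA_def)
    qed simp
    then obtain SA tA where SA: "\<forall>k<d. \<forall>l<d. SA k l = - SA l k"
      and repA: "\<forall>c\<in>A. \<forall>k<d. R c k = (\<Sum>l<d. SA k l * q c l) + tA k" by blast
    have "\<exists>S t. (\<forall>k<d. \<forall>l<d. S k l = - S l k) \<and> (\<forall>c\<in>B. \<forall>k<d. R c k = (\<Sum>l<d. S k l * q c l) + t k)"
    proof (rule frame[where zo="bV (1,1)" and F="\<lambda>i. if i = 0 then bV (0,0) else bV (0,i)"
          and lam="\<lambda>i. if i = 0 then -1 else 1"])
      show "\<And>x y. x \<in> B \<Longrightarrow> y \<in> B \<Longrightarrow> x \<noteq> y \<Longrightarrow> (\<Sum>k<d. (q x k - q y k) * (R x k - R y k)) = 0"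
        using eR cB unfolding is_clique_def by blast
      show "bV (1,1) \<in> B" using bB P11 by blast
      show "\<And>k. k < d \<Longrightarrow> q (bV (1,1)) k = 0" using qB[OF P11] by (simp add: posB_def)
      show "\<And>i. i < d \<Longrightarrow> (if i = 0 then bV (0,0) else bV (0,i)) \<in> B" using bB P00 P0j by auto
      show "\<And>i k. i < d \<Longrightarrow> k < d \<Longrightarrow> q (if i = 0 then bV (0,0) else bV (0,i)) k =
          (if k = i then (if i = 0 then -1 else 1) else 0)"
        using qB P00 P0j by (auto simp: posB_def)
    qed simp
    then obtain SB tB where SB: "\<forall>k<d. \<forall>l<d. SB k l = - SB l k"
      and repB: "\<forall>c\<in>B. \<forall>k<d. R c k = (\<Sum>l<d. SB k l * q c l) + tB k" by blast
    define D where "D k l = SA k l - SB k l" for k l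
    define \<tau> where "\<tau> k = tA k - tB k" for k
    have Dsk: "D k l = - D l k" if "k < d" "l < d" for k l
    proof -
      have "SA k l = - SA l k" "SB k l = - SB l k" using SA SB that by blast+
      then show ?thesis unfolding D_def by simp
    qed
    have E: "(\<Sum>k<d. (posA lb k - posB lb k) * ((\<Sum>l<d. D k l * posA lb l) + \<tau> k)) = 0"
      if lb: "lb \<in> P" for lb
    proof -
      have "(\<Sum>k<d. (q (aV lb) k - q (bV lb) k) * (R (aV lb) k - R (bV lb) k)) = 0"
        using eR[OF _ _ abne[OF lb] abG[OF lb]] aA[OF lb] bB[OF lb] by blast
      then have "(\<Sum>k<d. (posA lb k - posB lb k) * (((\<Sum>l<d. SA k l * posA lb l) + tA k)
                   - ((\<Sum>l<d. SB k l * posB lb l) + tB k))) = 0"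
        using repA aA[OF lb] repB bB[OF lb] by (simp add: qA[OF lb] qB[OF lb])
      from match_eq[OF SB this] show ?thesis unfolding D_def \<tau>_def .
    qed
    have sum2: "(\<Sum>k<d. ((if k = i then 1 else 0) - (if k = j then 1 else 0)) * g k) = g i - g j"
      if "i < d" "j < d" for i j and g :: "nat \<Rightarrow> real"
      using that by (simp add: left_diff_distrib sum_subtractf sum_unit2)
    have tau: "\<tau> i = 0" if i: "i < d" for i
    proof (cases "i = 0")
      case True
      have "0 = (\<Sum>k<d. (posA (0,0) k - posB (0,0) k) * ((\<Sum>l<d. D k l * posA (0,0) l) + \<tau> k))"
        using E[OF P00] by simp
      also have "\<dots> = (\<Sum>k<d. (if k = 0 then 1 else 0) * \<tau> k)"
        by (intro sum.cong refl) (simp add: posA_def posB_def)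
      also have "\<dots> = \<tau> 0" using i by (simp add: sum_unit2)
      finally show ?thesis using True by simp
    next
      case False
      have "0 = (\<Sum>k<d. (posA (i,i) k - posB (i,i) k) * ((\<Sum>l<d. D k l * posA (i,i) l) + \<tau> k))"
        using E[OF Pii[OF i]] by simp
      also have "\<dots> = (\<Sum>k<d. (if k = i then 1 else 0) * (D k i + \<tau> k))"
        using False i by (intro sum.cong refl) (simp add: posA_def posB_def sum_unit)
      also have "\<dots> = D i i + \<tau> i" using i by (simp add: sum_unit2)
      finally show ?thesis using Dsk[OF i i] by simp
    qed
    have Dlow: "D j i = 0" if ij: "i < j" "j < d" for i j
    proof -
      have ijP: "(i,j) \<in> P" using ij unfolding P_def by auto
      have "0 = (\<Sum>k<d. (posA (i,j) k - posB (i,j) k) * ((\<Sum>l<d. D k l * posA (i,j) l) + \<tau> k))"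
        using E[OF ijP] by simp
      also have "\<dots> = (\<Sum>k<d. ((if k = i then 1 else 0) - (if k = j then 1 else 0)) * (D k i + \<tau> k))"
        using ij by (intro sum.cong refl) (simp add: posA_def posB_def sum_unit)
      also have "\<dots> = (D i i + \<tau> i) - (D j i + \<tau> j)" using ij by (intro sum2) auto
      finally show ?thesis using Dsk[of i i] tau[of i] tau[of j] ij by simp
    qed
    have D0: "D k l = 0" if "k < d" "l < d" for k l
    proof -
      consider "k = l" | "l < k" | "k < l" by linarith
      then show ?thesis
      proof cases
        case 1 then show ?thesis using Dsk[OF that] by simp
      next
        case 2 then show ?thesis using Dlow that by simp
      next
        case 3 then show ?thesis using Dlow[OF 3 that(2)] Dsk[OF that] by simp
      qed
    qed
    have rep: "r (c,k) = (\<Sum>l<d. SA k l * q c l) + tA k" if "c \<in> A \<union> B" "k < d" for c k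
    proof (cases "c \<in> A")
      case True then show ?thesis using repA that unfolding R_def by blast
    next
      case False
      then have "c \<in> B" using that by auto
      then have "r (c,k) = (\<Sum>l<d. SB k l * q c l) + tB k" using repB that unfolding R_def by blast
      also have "\<dots> = (\<Sum>l<d. SA k l * q c l) + tA k"
        using D0 tau that unfolding D_def \<tau>_def by (intro arg_cong2[where f=plus] sum.cong) auto
      finally show ?thesis .
    qed
    show "\<forall>i\<in>(A \<union> B) \<times> {0..<d}. r i = 0"
      using trivial_orth_zero[OF V SA rep t] by blast
  qed
qed



lemma span_mono: "in_real_span w S \<Longrightarrow> S \<subseteq> S' \<Longrightarrow> in_real_span w S'"
  unfolding in_real_span_def by blast

theorem claim2p4:
  fixes d n :: nat and G :: "nat set set" and A B :: "nat set"
  assumes "d \<ge> 1"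
    and "is_graph n G"
    and "rigidity_closed d n G"
    and "A \<subseteq> {0..<n}" and "B \<subseteq> {0..<n}" and "A \<inter> B = {}"
    and "is_clique G A" and "is_clique G B"
    and "\<exists>M \<subseteq> G. card M = (d + 1) choose 2
             \<and> (\<forall>e\<in>M. \<exists>a\<in>A. \<exists>b\<in>B. e = {a, b})
             \<and> (\<forall>e\<in>M. \<forall>e'\<in>M. e \<noteq> e' \<longrightarrow> e \<inter> e' = {})"
  shows "is_clique G (A \<union> B)"
proof -
  obtain p where gen: "generic d n p" and cl: "rigidity_closure d n p G = G"
    using assms(3) unfolding rigidity_closed_def by blast
  obtain M where MM: "M \<subseteq> G \<and> card M = (d + 1) choose 2 \<and> (\<forall>e\<in>M. \<exists>a\<in>A. \<exists>b\<in>B. e = {a, b})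
      \<and> (\<forall>e\<in>M. \<forall>e'\<in>M. e \<noteq> e' \<longrightarrow> e \<inter> e' = {})"
    using assms(9) by (rule exE)
  have M: "M \<subseteq> G" "card M = (d + 1) choose 2" "\<forall>e\<in>M. \<exists>a\<in>A. \<exists>b\<in>B. e = {a, b}"
      "\<forall>e\<in>M. \<forall>e'\<in>M. e \<noteq> e' \<longrightarrow> e \<inter> e' = {}"
    using conjunct1[OF MM] conjunct1[OF conjunct2[OF MM]] conjunct1[OF conjunct2[OF conjunct2[OF MM]]]
      conjunct2[OF conjunct2[OF conjunct2[OF MM]]] by this+
  define V where "V = A \<union> B"
  have "finite A" by (rule finite_subset[OF assms(4)]) simp
  moreover have "finite B" by (rule finite_subset[OF assms(5)]) simp
  ultimately have finV: "finite V" unfolding V_def by simp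
  have Vn: "V \<subseteq> {0..<n}" unfolding V_def using assms(4,5) by blast
  have "\<exists>q. wit_prop d V G q"
  proof (cases "d = 1")
    case True
    then have "card M = 1" using M(2) by (simp add: numeral_2_eq_2)
    then obtain e where "e \<in> M" by (auto simp: card_Suc_eq)
    then obtain a b where ab: "a \<in> A" "b \<in> B" "e = {a,b}" using M(3) by blast
    have "a \<noteq> b" using ab assms(6) by blast
    moreover have "{a,b} \<in> G" using ab \<open>e \<in> M\<close> M(1) by blast
    ultimately show ?thesis unfolding V_def True
      using witness1[OF finV[unfolded V_def] assms(7,8) ab(1,2)] by blast
  next
    case False
    then have "2 \<le> d" using assms(1) by simp
    then show ?thesis unfolding V_def
      using witness2[OF _ finV[unfolded V_def] assms(6,7,8) M] by blast
  qed
  then obtain q0 where wq: "wit_prop d V G q0" by blast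
  define Ed where "Ed = {(x,y). x \<in> V \<and> y \<in> V \<and> x \<noteq> y \<and> {x,y} \<in> G}"
  have finEd: "finite Ed" unfolding Ed_def
    by (rule finite_subset[of _ "V \<times> V"]) (use finV in auto)
  have EdV: "Ed \<subseteq> {(x,y). x \<in> V \<and> y \<in> V \<and> x \<noteq> y}" unfolding Ed_def by auto
  have cross: "{x,y} \<in> G" if xy: "x \<in> A" "y \<in> B" for x y
  proof -
    have xyV: "x \<in> V" "y \<in> V" "x \<noteq> y" using xy assms(6) unfolding V_def by auto
    have sp: "in_real_span (rvec d n p x y) ((\<lambda>e. rvec d n p (fst e) (snd e)) ` Ed)"
    proof (rule main_span[OF gen finV Vn finEd EdV _ xyV])
      fix r :: "nat \<times> nat \<Rightarrow> real"
      assume h1: "\<forall>e\<in>Ed. ip (V \<times> {0..<d}) r (rvec d n q0 (fst e) (snd e)) = 0"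
        and h2: "\<forall>j\<in>Jt d. ip (V \<times> {0..<d}) r (triv d V q0 j) = 0"
      have "\<forall>x'\<in>V. \<forall>y'\<in>V. x' \<noteq> y' \<longrightarrow> {x',y'} \<in> G \<longrightarrow>
          (\<Sum>k<d. (q0 x' k - q0 y' k) * (r (x',k) - r (y',k))) = 0"
      proof (intro ballI impI)
        fix x' y' assume "x' \<in> V" "y' \<in> V" "x' \<noteq> y'" "{x',y'} \<in> G"
        then have "(x',y') \<in> Ed" unfolding Ed_def by auto
        then have "ip (V \<times> {0..<d}) r (rvec d n q0 x' y') = 0" using h1 by fastforce
        then show "(\<Sum>k<d. (q0 x' k - q0 y' k) * (r (x',k) - r (y',k))) = 0"
          using ip_rvec[OF finV Vn \<open>x' \<in> V\<close> \<open>y' \<in> V\<close> \<open>x' \<noteq> y'\<close>] by simp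
      qed
      then show "\<forall>i\<in>V \<times> {0..<d}. r i = 0" using wq h2 unfolding wit_prop_def by blast
    qed
    have "(\<lambda>e. rvec d n p (fst e) (snd e)) ` Ed \<subseteq> {rvec d n p u v | u v. u \<noteq> v \<and> {u, v} \<in> G}"
    proof
      fix w assume "w \<in> (\<lambda>e. rvec d n p (fst e) (snd e)) ` Ed"
      then obtain a b where "(a,b) \<in> Ed" "w = rvec d n p a b" by auto
      then show "w \<in> {rvec d n p u v | u v. u \<noteq> v \<and> {u, v} \<in> G}" unfolding Ed_def by auto
    qed
    with sp have "in_real_span (rvec d n p x y) {rvec d n p u v | u v. u \<noteq> v \<and> {u, v} \<in> G}"
      by (rule span_mono)
    moreover have "x < n" "y < n" using xyV Vn by auto
    ultimately have "{x,y} \<in> rigidity_closure d n p G"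
      unfolding rigidity_closure_def using xyV(3) by blast
    then show ?thesis using cl by simp
  qed
  show ?thesis unfolding is_clique_def
  proof (intro ballI impI)
    fix x y assume "x \<in> A \<union> B" "y \<in> A \<union> B" "x \<noteq> y"
    then consider "x \<in> A" "y \<in> A" | "x \<in> B" "y \<in> B" | "x \<in> A" "y \<in> B" | "x \<in> B" "y \<in> A" by blast
    then show "{x,y} \<in> G"
    proof cases
      case 1 then show ?thesis using assms(7) \<open>x \<noteq> y\<close> unfolding is_clique_def by blast
    next
      case 2 then show ?thesis using assms(8) \<open>x \<noteq> y\<close> unfolding is_clique_def by blast
    next
      case 3 then show ?thesis using cross by blast
    next
      case 4 then show ?thesis using cross[of y x] by (simp add: insert_commute)
    qed
  qed
qed

end
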